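(* Let $z_0\in\mathbb{C}$, $\mathcal{B}$ a neighborhood of $z_0$, $a\in\mathbb{C}$, and let $p,q$ be holomorphic on a domain containing $\mathcal{B}$, $p$ not constant, with $p(z)=p(z_0)-p_0(z-z_0)^\mu(1-\phi(z))$ on $\mathcal{B}$, $\mu\in\mathbb{Z}_{\ge1}$, $p_0\ne0$, $\phi$ holomorphic on $\mathcal{B}$, $\phi(z_0)=0$. Let $$\alpha_s=\frac{1}{\mu\,s!}p_0^{-(s+a)/\mu}\frac{d^s}{dz^s}\Big\{q(z)(1-\phi(z))^{-(s+a)/\mu}\Big\}_{z=z_0}.$$ Let $K_q^*$ be a bound for $|q(z)|$ on $\mathcal{B}$. Then $$\alpha_s=O\big(K_q^*\cdot C^s\big)\quad\text{for } s\in\mathbb{Z}_{\ge0},$$ where the positive constant $C$ and the implied constant are both independent of $q$ and $s$.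
   Context: Powers are principal values: $u^\tau=e^{\tau\log u}$ with $\log$ having arguments in $(-\pi,\pi]$. *)

theory Defs
  imports "HOL-Complex_Analysis.Complex_Analysis"
begin

text \<open>The coefficient alpha_s of the paper:
  alpha_s = 1/(mu s!) * p0^{-(s+a)/mu} * d^s/dz^s { q(z) (1 - phi(z))^{-(s+a)/mu} } at z = z0,
  with principal-value powers (Isabelle's complex powr uses Ln with arg in (-pi,pi]).\<close>
definition alpha_coeff ::
  "complex \<Rightarrow> complex \<Rightarrow> nat \<Rightarrow> complex \<Rightarrow> (complex \<Rightarrow> complex) \<Rightarrow> (complex \<Rightarrow> complex) \<Rightarrow> nat \<Rightarrow> complex"
  where
  "alpha_coeff z0 a \<mu> p0 \<phi> q s =
     (1 / (of_nat \<mu> * of_nat (fact s))) *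
     p0 powr (- (of_nat s + a) / of_nat \<mu>) *
     (deriv ^^ s) (\<lambda>z. q z * (1 - \<phi> z) powr (- (of_nat s + a) / of_nat \<mu>)) z0"

end

theory Submission
  imports Defs
begin

lemma norm_powr_bound:
  fixes u w :: complex
  shows "norm (u powr w) \<le> exp (norm w * norm (Ln u))"
proof (cases "u = 0")
  case True then show ?thesis by simp
next
  case False
  have "norm (u powr w) = exp (Re (w * Ln u))"
    using False by (simp add: powr_def norm_exp_eq_Re)
  also have "\<dots> \<le> exp (norm (w * Ln u))"
    by (simp only: exp_le_cancel_iff complex_Re_le_cmod)
  also have "\<dots> = exp (norm w * norm (Ln u))" by (simp add: norm_mult)
  finally show ?thesis .
qed

lemma norm_w_bound:
  fixes a :: complex and s \<mu> :: nat
  assumes "\<mu> \<ge> 1"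
  shows "norm (- (of_nat s + a) / of_nat \<mu>) \<le> real s + norm a"
proof -
  have "norm (- (of_nat s + a) / of_nat \<mu> :: complex) = norm (of_nat s + a :: complex) / real \<mu>"
    by (simp only: norm_divide norm_minus_cancel norm_of_nat)
  also have "\<dots> \<le> norm (of_nat s + a :: complex)"
  proof -
    have "real \<mu> \<ge> 1" using assms by simp
    hence "norm (of_nat s + a :: complex) / real \<mu> \<le> norm (of_nat s + a :: complex) / 1"
      by (intro divide_left_mono) auto
    thus ?thesis by simp
  qed
  also have "\<dots> \<le> real s + norm a"
    using norm_triangle_ineq[of "of_nat s :: complex" a] by simp
  finally show ?thesis .
qed

lemma exp_split:
  fixes X t :: real and s :: nat
  assumes "X \<ge> 0" "t \<ge> 0"
  shows "exp ((real s + t) * X) = exp (t * X) * exp X ^ s"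
proof -
  have "exp ((real s + t) * X) = exp (t * X) * exp (real s * X)"
    by (subst exp_add[symmetric]) (simp add: algebra_simps)
  also have "exp (real s * X) = exp X ^ s" by (rule exp_of_nat_mult)
  finally show ?thesis .
qed

theorem proposition7p3:
  fixes z0 a p0 :: complex and B D :: "complex set" and p \<phi> :: "complex \<Rightarrow> complex" and \<mu> :: nat
  assumes "open B" and "z0 \<in> B"
    and "open D" and "connected D" and "B \<subseteq> D"
    and "p holomorphic_on D"
    and "\<not> (\<exists>c. \<forall>z\<in>D. p z = c)"
    and "\<mu> \<ge> 1" and "p0 \<noteq> 0"
    and "\<phi> holomorphic_on B" and "\<phi> z0 = 0"
    and "\<forall>z\<in>B. p z = p z0 - p0 * (z - z0) ^ \<mu> * (1 - \<phi> z)"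
  shows "\<exists>C>0. \<exists>M. \<forall>q K s. q holomorphic_on D \<longrightarrow> (\<forall>z\<in>B. norm (q z) \<le> K) \<longrightarrow>
           norm (alpha_coeff z0 a \<mu> p0 \<phi> q s) \<le> M * K * C ^ s"
proof -
  have contphi: "continuous_on B \<phi>"
    using assms(10) holomorphic_on_imp_continuous_on by blast
  obtain e1 where e1: "e1 > 0" "ball z0 e1 \<subseteq> B"
    using assms(1,2) openE by blast
  obtain d where d: "d > 0" "\<forall>x'\<in>B. dist x' z0 < d \<longrightarrow> dist (\<phi> x') (\<phi> z0) < 1/2"
    using contphi assms(2) unfolding continuous_on_iff by (meson half_gt_zero zero_less_one)
  define e where "e = min d e1"
  have e: "e > 0" "ball z0 e \<subseteq> B" using d e1 unfolding e_def by auto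
  have phis: "norm (\<phi> z) < 1/2" if "z \<in> ball z0 e" for z
    using d(2) e that assms(11) by (auto simp: e_def dist_commute)
  have nonpos: "1 - \<phi> z \<notin> \<real>\<^sub>\<le>\<^sub>0" if "z \<in> ball z0 e" for z
  proof -
    have "Re (\<phi> z) < 1/2" using phis[OF that] complex_Re_le_cmod[of "\<phi> z"] by linarith
    hence "Re (1 - \<phi> z) > 0" by simp
    thus ?thesis by (auto simp: complex_nonpos_Reals_iff)
  qed
  define r where "r = e / 2"
  have r: "r > 0" "cball z0 r \<subseteq> ball z0 e" using e unfolding r_def by auto
  have holphi: "\<phi> holomorphic_on ball z0 e" using assms(10) e(2) holomorphic_on_subset by blast
  have contL: "continuous_on (cball z0 r) (\<lambda>z. Ln (1 - \<phi> z))"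
    using r nonpos holphi
    by (intro continuous_intros holomorphic_on_imp_continuous_on[OF holomorphic_on_subset[OF holphi]]) auto
  have "bounded ((\<lambda>z. Ln (1 - \<phi> z)) ` cball z0 r)"
    by (intro compact_imp_bounded compact_continuous_image contL) simp
  then obtain L0 where L0: "\<forall>y\<in>(\<lambda>z. Ln (1 - \<phi> z)) ` cball z0 r. norm y \<le> L0"
    unfolding bounded_iff by blast
  define L where "L = max L0 0"
  have L: "L \<ge> 0" "\<And>z. z \<in> cball z0 r \<Longrightarrow> norm (Ln (1 - \<phi> z)) \<le> L"
    using L0 unfolding L_def by force+
  define Lp where "Lp = norm (Ln p0)"
  have Lp: "Lp \<ge> 0" unfolding Lp_def by simp
  define C where "C = exp (L + Lp) / r"
  define M where "M = exp (norm a * (L + Lp))"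
  have C0: "C > 0" using r unfolding C_def by simp
  have "\<forall>q K s. q holomorphic_on D \<longrightarrow> (\<forall>z\<in>B. norm (q z) \<le> K) \<longrightarrow>
           norm (alpha_coeff z0 a \<mu> p0 \<phi> q s) \<le> M * K * C ^ s"
  proof (intro allI impI)
    fix q K s
    assume hq: "q holomorphic_on D" and hK: "\<forall>z\<in>B. norm (q z) \<le> K"
    have K0: "K \<ge> 0" using hK assms(2) norm_ge_zero order_trans by blast
    have qK: "norm (q x) \<le> K" if "x \<in> cball z0 r" for x using hK that r e by blast
    define w :: complex where "w = - (of_nat s + a) / of_nat \<mu>"
    have wb: "norm w \<le> real s + norm a" unfolding w_def using norm_w_bound assms(8) by blast
    define f where "f = (\<lambda>z. q z * (1 - \<phi> z) powr w)"
    have holf: "f holomorphic_on ball z0 e"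
      unfolding f_def using holphi nonpos hq assms(5) e(2)
      by (intro holomorphic_intros holomorphic_on_subset[OF hq]) auto
    have holf': "f holomorphic_on ball z0 r"
      using holf r holomorphic_on_subset ball_subset_cball by blast
    have contf: "continuous_on (cball z0 r) f"
      using holf r holomorphic_on_imp_continuous_on continuous_on_subset by blast
    have fb: "norm (f x) \<le> K * exp ((real s + norm a) * L)" if "x \<in> cball z0 r" for x
    proof -
      have "norm (f x) = norm (q x) * norm ((1 - \<phi> x) powr w)"
        unfolding f_def by (simp add: norm_mult)
      also have "\<dots> \<le> K * exp (norm w * norm (Ln (1 - \<phi> x)))"
        using qK that norm_powr_bound K0
        by (intro mult_mono) auto
      also have "\<dots> \<le> K * exp ((real s + norm a) * L)"
        using K0 wb L that by (intro mult_left_mono) (auto intro!: mult_mono)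
      finally show ?thesis .
    qed
    have dbound: "norm ((deriv ^^ s) f z0) \<le> fact s * (K * exp ((real s + norm a) * L)) / r ^ s"
      by (rule Cauchy_inequality[OF holf' contf r(1)]) (auto intro: fb simp: dist_norm)
    have pb: "norm (p0 powr w) \<le> exp ((real s + norm a) * Lp)"
      using norm_powr_bound[of p0 w] wb Lp unfolding Lp_def
      by (smt (verit) exp_mono mult_right_mono norm_ge_zero)
    have "norm (alpha_coeff z0 a \<mu> p0 \<phi> q s) =
        (1 / (real \<mu> * fact s)) * norm (p0 powr w) * norm ((deriv ^^ s) f z0)"
      unfolding alpha_coeff_def f_def w_def by (simp add: norm_mult norm_divide)
    also have "\<dots> \<le> (1 / fact s) * exp ((real s + norm a) * Lp) *
        (fact s * (K * exp ((real s + norm a) * L)) / r ^ s)"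
      using assms(8) pb dbound
      by (intro mult_mono) (auto simp: field_simps)
    also have "\<dots> = K * exp ((real s + norm a) * (L + Lp)) / r ^ s"
      by (simp add: field_simps exp_add[symmetric])
    also have "\<dots> = M * K * C ^ s"
      unfolding M_def C_def using exp_split[of "L + Lp" "norm a" s] L Lp
      by (simp add: power_divide)
    finally show "norm (alpha_coeff z0 a \<mu> p0 \<phi> q s) \<le> M * K * C ^ s" .
  qed
  with C0 show ?thesis by blast
qed

end
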